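(* Let $(\mathcal S,\mathcal A,P,r)$ be any finite MDP (general/multichain) and let $(g^\star,h^\star)$ be a solution of the modified Bellman equations. Let $V^0\in\mathbb R^n$ and let $V^k=\lambda_kV^0+(1-\lambda_k)TV^{k-1}$ for $k\ge1$ with $\lambda_k=\frac{2}{k+2}$ (Anchored Value Iteration), and for each $k$ let $\pi_k$ be a greedy policy, i.e. $T^{\pi_k}V^k=TV^k$. Let $\mathcal D$ be the set of all deterministic policies, \[\epsilon=\inf_{\pi\in\mathcal D\setminus\{\pi\,:\,\mathcal P^{\pi}g^\star=g^\star\}}\|\mathcal P^{\pi}g^\star-g^\star\|_\infty\in(0,\infty]\] (with $\epsilon=+\infty$ if the index set is empty), and $K=\big(3\|r\|_\infty+12\|V^0-h^\star\|_\infty+3\|g^\star\|_\infty\big)/\epsilon$. Then for every $k>K$, \[\|g^\star-g^{\pi_k}\|_\infty\le\|TV^k-V^k-g^\star\|_\infty\le\frac{8}{k+1}\|V^0-h^\star\|_\infty+\frac{K}{k+1}\|g^\star\|_\infty.\]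
   Context: An MDP $(\mathcal S,\mathcal A,P,r)$ has finite state space $\mathcal S$ with $|\mathcal S|=n$ (functions on $\mathcal S$ are identified with vectors in $\mathbb R^n$), finite action space $\mathcal A$, transition probabilities $P(s'\mid s,a)$ and bounded reward $r$, $\|r\|_\infty=\max_{s,a}|r(s,a)|$. A policy $\pi$ assigns to each state a distribution $\pi(\cdot\mid s)$ on $\mathcal A$; $r^\pi(s)=\sum_a\pi(a\mid s)r(s,a)$, $\mathcal P^\pi(s,s')=\sum_a\pi(a\mid s)P(s'\mid s,a)$. Average reward: $g^\pi(s)=\liminf_{T\to\infty}\frac1T\mathbb E_\pi[\sum_{t=0}^{T-1}r(s_t,a_t)\mid s_0=s]$, $g^\star(s)=\max_\pi g^\pi(s)$. $T^\pi V=r^\pi+\mathcal P^\pi V$; $(TV)(s)=\max_a\{r(s,a)+\sum_{s'}P(s'\mid s,a)V(s')\}$. A pair $(g,h)$ solves the modified Bellman equations if $\max_a\sum_{s'}P(s'\mid s,a)g(s')=g(s)$ and $\max_a\{r(s,a)+\sum_{s'}P(s'\mid s,a)h(s')\}=h(s)+g(s)$ for all $s$, with some policy attaining both maxima simultaneously; solutions exist and the first component of any solution equals $g^\star$. A policy is deterministic if each $\pi(\cdot\mid s)$ is a point mass. *)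

theory Defs
  imports "HOL-Analysis.Analysis"
begin

definition is_mdp :: "('s::finite \<Rightarrow> 'a::finite \<Rightarrow> 's \<Rightarrow> real) \<Rightarrow> bool" where
  "is_mdp P \<longleftrightarrow> (\<forall>s a s'. 0 \<le> P s a s') \<and> (\<forall>s a. (\<Sum>s'\<in>UNIV. P s a s') = 1)"

text \<open>A (randomized, stationary) policy: pol s a = probability of action a in state s.\<close>
definition is_policy :: "('s::finite \<Rightarrow> 'a::finite \<Rightarrow> real) \<Rightarrow> bool" where
  "is_policy pol \<longleftrightarrow> (\<forall>s a. 0 \<le> pol s a) \<and> (\<forall>s. (\<Sum>a\<in>UNIV. pol s a) = 1)"

definition deterministic_policies :: "('s::finite \<Rightarrow> 'a::finite \<Rightarrow> real) set" where
  "deterministic_policies = {pol. \<forall>s. \<exists>a. \<forall>b. pol s b = (if b = a then 1 else 0)}"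

definition sup_norm :: "('s::finite \<Rightarrow> real) \<Rightarrow> real" where
  "sup_norm V = Max (range (\<lambda>s. \<bar>V s\<bar>))"

definition reward_norm :: "('s::finite \<Rightarrow> 'a::finite \<Rightarrow> real) \<Rightarrow> real" where
  "reward_norm r = Max (range (\<lambda>(s,a). \<bar>r s a\<bar>))"

definition r_pol :: "('s::finite \<Rightarrow> 'a::finite \<Rightarrow> real) \<Rightarrow> ('s \<Rightarrow> 'a \<Rightarrow> real) \<Rightarrow> 's \<Rightarrow> real" where
  "r_pol r pol s = (\<Sum>a\<in>UNIV. pol s a * r s a)"

definition P_pol :: "('s::finite \<Rightarrow> 'a::finite \<Rightarrow> 's \<Rightarrow> real) \<Rightarrow> ('s \<Rightarrow> 'a \<Rightarrow> real) \<Rightarrow> ('s \<Rightarrow> real) \<Rightarrow> 's \<Rightarrow> real" where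
  "P_pol P pol V s = (\<Sum>s'\<in>UNIV. (\<Sum>a\<in>UNIV. pol s a * P s a s') * V s')"

definition T_pol where
  "T_pol P r pol V s = r_pol r pol s + P_pol P pol V s"

definition bellman_T :: "('s::finite \<Rightarrow> 'a::finite \<Rightarrow> 's \<Rightarrow> real) \<Rightarrow> ('s \<Rightarrow> 'a \<Rightarrow> real) \<Rightarrow> ('s \<Rightarrow> real) \<Rightarrow> 's \<Rightarrow> real" where
  "bellman_T P r V s = Max (range (\<lambda>a. r s a + (\<Sum>s'\<in>UNIV. P s a s' * V s')))"

text \<open>Average reward of policy pol: liminf over T of (1/T) sum_{t<T} E[r(s_t,a_t) | s_0 = s],
  where E_pi[r(s_t,a_t) | s_0 = s] = ((P^pol)^t r^pol)(s). The average is bounded,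
  so the liminf (taken in ereal) is finite.\<close>
definition gain :: "('s::finite \<Rightarrow> 'a::finite \<Rightarrow> 's \<Rightarrow> real) \<Rightarrow> ('s \<Rightarrow> 'a \<Rightarrow> real) \<Rightarrow> ('s \<Rightarrow> 'a \<Rightarrow> real) \<Rightarrow> 's \<Rightarrow> real" where
  "gain P r pol s = real_of_ereal (liminf (\<lambda>T::nat. ereal ((1 / real T) *
      (\<Sum>t<T. ((P_pol P pol ^^ t) (r_pol r pol)) s))))"

definition modified_bellman :: "('s::finite \<Rightarrow> 'a::finite \<Rightarrow> 's \<Rightarrow> real) \<Rightarrow> ('s \<Rightarrow> 'a \<Rightarrow> real) \<Rightarrow> ('s \<Rightarrow> real) \<Rightarrow> ('s \<Rightarrow> real) \<Rightarrow> bool" where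
  "modified_bellman P r g h \<longleftrightarrow>
     (\<forall>s. Max (range (\<lambda>a. \<Sum>s'\<in>UNIV. P s a s' * g s')) = g s) \<and>
     (\<forall>s. bellman_T P r h s = h s + g s) \<and>
     (\<exists>pol. is_policy pol \<and> (\<forall>s. P_pol P pol g s = g s) \<and> (\<forall>s. T_pol P r pol h s = h s + g s))"

primrec anchored_VI :: "('s::finite \<Rightarrow> 'a::finite \<Rightarrow> 's \<Rightarrow> real) \<Rightarrow> ('s \<Rightarrow> 'a \<Rightarrow> real) \<Rightarrow> ('s \<Rightarrow> real) \<Rightarrow> nat \<Rightarrow> 's \<Rightarrow> real" where
  "anchored_VI P r V0 0 = V0"
| "anchored_VI P r V0 (Suc k) = (\<lambda>s. (2 / (real (Suc k) + 2)) * V0 s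
      + (1 - 2 / (real (Suc k) + 2)) * bellman_T P r (anchored_VI P r V0 k) s)"

definition gap_eps :: "('s::finite \<Rightarrow> 'a::finite \<Rightarrow> 's \<Rightarrow> real) \<Rightarrow> ('s \<Rightarrow> real) \<Rightarrow> ereal" where
  "gap_eps P g = (INF pol \<in> {pol \<in> deterministic_policies. P_pol P pol g \<noteq> g}.
        ereal (sup_norm (\<lambda>s. P_pol P pol g s - g s)))"

end

theory Submission
  imports Defs
begin
definition PV :: "('s::finite \<Rightarrow> 'a::finite \<Rightarrow> 's \<Rightarrow> real) \<Rightarrow> 's \<Rightarrow> 'a \<Rightarrow> ('s \<Rightarrow> real) \<Rightarrow> real" where
  "PV P s a V = (\<Sum>s'\<in>UNIV. P s a s' * V s')"

lemma sup_norm_ge: "\<bar>V s\<bar> \<le> sup_norm V"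
  unfolding sup_norm_def by (rule Max_ge) auto

lemma sup_norm_le: "(\<And>s. \<bar>V s\<bar> \<le> c) \<Longrightarrow> sup_norm V \<le> c"
  unfolding sup_norm_def by (subst Max_le_iff) auto

lemma sup_norm_nonneg: "0 \<le> sup_norm V"
  using sup_norm_ge[of V undefined] by linarith

lemma reward_norm_ge: "\<bar>r s a\<bar> \<le> reward_norm r"
  unfolding reward_norm_def by (rule Max_ge) auto

lemma PV_add: "PV P s a (\<lambda>x. V x + W x) = PV P s a V + PV P s a W"
  unfolding PV_def by (simp add: distrib_left sum.distrib)
lemma PV_diff: "PV P s a (\<lambda>x. V x - W x) = PV P s a V - PV P s a W"
  unfolding PV_def by (simp add: right_diff_distrib sum_subtractf)
lemma PV_scale: "PV P s a (\<lambda>x. c * V x) = c * PV P s a V"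
  unfolding PV_def by (simp add: sum_distrib_left mult.left_commute)

lemma PV_upper: assumes "is_mdp P" "\<And>x. V x \<le> c" shows "PV P s a V \<le> c"
proof -
  have "PV P s a V \<le> (\<Sum>s'\<in>UNIV. P s a s' * c)"
    unfolding PV_def using assms by (intro sum_mono mult_left_mono) (auto simp: is_mdp_def)
  also have "\<dots> = c" using assms(1) by (simp add: is_mdp_def sum_distrib_right[symmetric])
  finally show ?thesis .
qed
lemma PV_lower: assumes "is_mdp P" "\<And>x. c \<le> V x" shows "c \<le> PV P s a V"
proof -
  have "(\<Sum>s'\<in>UNIV. P s a s' * c) \<le> PV P s a V"
    unfolding PV_def using assms by (intro sum_mono mult_left_mono) (auto simp: is_mdp_def)
  moreover have "(\<Sum>s'\<in>UNIV. P s a s' * c) = c" using assms(1) by (simp add: is_mdp_def sum_distrib_right[symmetric])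
  ultimately show ?thesis by simp
qed
lemma PV_abs: assumes "is_mdp P" "\<And>x. \<bar>V x\<bar> \<le> c" shows "\<bar>PV P s a V\<bar> \<le> c"
  using PV_upper[OF assms(1), of V c s a] PV_lower[OF assms(1), of "-c" V s a] assms(2)
  by (smt (verit))

lemma T_ge: "r s a + PV P s a V \<le> bellman_T P r V s"
  unfolding bellman_T_def PV_def by (rule Max_ge) auto

lemma T_ex: "\<exists>a. bellman_T P r V s = r s a + PV P s a V"
proof -
  have "bellman_T P r V s \<in> range (\<lambda>a. r s a + PV P s a V)"
    unfolding bellman_T_def PV_def by (rule Max_in) auto
  then show ?thesis by auto
qed

lemma T_diff_le: assumes "bellman_T P r V s = r s a + PV P s a V"
  shows "bellman_T P r V s - bellman_T P r W s \<le> PV P s a (\<lambda>x. V x - W x)"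
  using T_ge[of r s a P W] assms by (simp add: PV_diff)

lemma T_nonexp: assumes "is_mdp P" "\<And>x. \<bar>V x - W x\<bar> \<le> c"
  shows "\<bar>bellman_T P r V s - bellman_T P r W s\<bar> \<le> c"
proof -
  obtain a where a: "bellman_T P r V s = r s a + PV P s a V" using T_ex by blast
  obtain b where b: "bellman_T P r W s = r s b + PV P s b W" using T_ex by blast
  have u1: "PV P s a (\<lambda>x. V x - W x) \<le> c"
    by (rule PV_upper[OF assms(1)]) (use assms(2) abs_le_D1 in blast)
  have u2: "PV P s b (\<lambda>x. W x - V x) \<le> c"
    by (rule PV_upper[OF assms(1)]) (use assms(2) abs_le_D2 in fastforce)
  have 1: "bellman_T P r V s - bellman_T P r W s \<le> c"
    using T_diff_le[OF a, of W] u1 by linarith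
  have 2: "bellman_T P r W s - bellman_T P r V s \<le> c"
    using T_diff_le[OF b, of V] u2 by linarith
  show ?thesis using 1 2 by linarith
qed

lemma P_pol_eq: "P_pol P pol V s = (\<Sum>a\<in>UNIV. pol s a * PV P s a V)"
proof -
  have "P_pol P pol V s = (\<Sum>s'\<in>UNIV. \<Sum>a\<in>UNIV. pol s a * (P s a s' * V s'))"
    unfolding P_pol_def by (simp add: sum_distrib_right mult.assoc)
  also have "\<dots> = (\<Sum>a\<in>UNIV. \<Sum>s'\<in>UNIV. pol s a * (P s a s' * V s'))"
    by (rule sum.swap)
  also have "\<dots> = (\<Sum>a\<in>UNIV. pol s a * PV P s a V)"
    unfolding PV_def by (simp add: sum_distrib_left)
  finally show ?thesis .
qed

lemma T_pol_eq: "T_pol P r pol V s = (\<Sum>a\<in>UNIV. pol s a * (r s a + PV P s a V))"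
  unfolding T_pol_def r_pol_def P_pol_eq by (simp add: distrib_left sum.distrib)

lemma T_pol_le: assumes "is_policy pol" shows "T_pol P r pol V s \<le> bellman_T P r V s"
proof -
  have "T_pol P r pol V s \<le> (\<Sum>a\<in>UNIV. pol s a * bellman_T P r V s)"
    unfolding T_pol_eq using assms T_ge by (intro sum_mono mult_left_mono) (auto simp: is_policy_def)
  also have "\<dots> = bellman_T P r V s" using assms by (simp add: is_policy_def sum_distrib_right[symmetric])
  finally show ?thesis .
qed

definition stoch :: "(('s::finite \<Rightarrow> real) \<Rightarrow> 's \<Rightarrow> real) \<Rightarrow> bool" where
  "stoch F \<longleftrightarrow> (\<exists>M. (\<forall>s s'. 0 \<le> M s s') \<and> (\<forall>s. (\<Sum>s'\<in>UNIV. M s s') = 1)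
      \<and> (\<forall>V s. F V s = (\<Sum>s'\<in>UNIV. M s s' * V s')))"

lemma stoch_P_pol: assumes "is_mdp P" "is_policy pol" shows "stoch (P_pol P pol)"
  unfolding stoch_def
proof (intro exI[of _ "\<lambda>s s'. \<Sum>a\<in>UNIV. pol s a * P s a s'"] conjI allI)
  fix s s' show "0 \<le> (\<Sum>a\<in>UNIV. pol s a * P s a s')"
    using assms by (intro sum_nonneg mult_nonneg_nonneg) (auto simp: is_mdp_def is_policy_def)
next
  fix s
  have "(\<Sum>s'\<in>UNIV. \<Sum>a\<in>UNIV. pol s a * P s a s') = (\<Sum>a\<in>UNIV. \<Sum>s'\<in>UNIV. pol s a * P s a s')"
    by (rule sum.swap)
  also have "\<dots> = (\<Sum>a\<in>UNIV. pol s a)"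
    using assms(1) by (simp add: sum_distrib_left[symmetric] is_mdp_def)
  finally show "(\<Sum>s'\<in>UNIV. \<Sum>a\<in>UNIV. pol s a * P s a s') = 1" using assms(2) by (simp add: is_policy_def)
next
  fix V s show "P_pol P pol V s = (\<Sum>s'\<in>UNIV. (\<Sum>a\<in>UNIV. pol s a * P s a s') * V s')"
    unfolding P_pol_def ..
qed

lemma stoch_id: "stoch (\<lambda>V::'s::finite \<Rightarrow> real. V)"
  unfolding stoch_def
proof (intro exI[of _ "\<lambda>s s'. if s = s' then 1 else 0"] conjI allI)
  fix V :: "'s \<Rightarrow> real" and s
  show "V s = (\<Sum>s'\<in>UNIV. (if s = s' then 1 else 0) * V s')"
  proof -
    have "(\<Sum>s'\<in>UNIV. (if s = s' then 1 else 0) * V s') = (\<Sum>s'\<in>UNIV. if s = s' then V s' else 0)"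
      by (rule sum.cong) auto
    then show ?thesis by (simp add: sum.delta')
  qed
qed auto

lemma stoch_comp: assumes "stoch F" "stoch H" shows "stoch (\<lambda>V. F (H V))"
proof -
  obtain M where M: "\<forall>s s'. 0 \<le> M s s'" "\<forall>s. (\<Sum>s'\<in>UNIV. M s s') = 1" "\<forall>V s. F V s = (\<Sum>s'\<in>UNIV. M s s' * V s')"
    using assms(1) unfolding stoch_def by blast
  obtain N where N: "\<forall>s s'. 0 \<le> N s s'" "\<forall>s. (\<Sum>s'\<in>UNIV. N s s') = 1" "\<forall>V s. H V s = (\<Sum>s'\<in>UNIV. N s s' * V s')"
    using assms(2) unfolding stoch_def by blast
  show ?thesis unfolding stoch_def
  proof (intro exI[of _ "\<lambda>s s''. \<Sum>s'\<in>UNIV. M s s' * N s' s''"] conjI allI)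
    fix s s'' show "0 \<le> (\<Sum>s'\<in>UNIV. M s s' * N s' s'')" using M N by (intro sum_nonneg) auto
  next
    fix s
    have "(\<Sum>s''\<in>UNIV. \<Sum>s'\<in>UNIV. M s s' * N s' s'') = (\<Sum>s'\<in>UNIV. \<Sum>s''\<in>UNIV. M s s' * N s' s'')"
      by (rule sum.swap)
    also have "\<dots> = (\<Sum>s'\<in>UNIV. M s s')" using N by (simp add: sum_distrib_left[symmetric])
    finally show "(\<Sum>s''\<in>UNIV. \<Sum>s'\<in>UNIV. M s s' * N s' s'') = 1" using M by simp
  next
    fix V s
    have "F (H V) s = (\<Sum>s'\<in>UNIV. M s s' * (\<Sum>s''\<in>UNIV. N s' s'' * V s''))" using M N by simp
    also have "\<dots> = (\<Sum>s'\<in>UNIV. \<Sum>s''\<in>UNIV. M s s' * N s' s'' * V s'')"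
      by (simp add: sum_distrib_left mult.assoc)
    also have "\<dots> = (\<Sum>s''\<in>UNIV. \<Sum>s'\<in>UNIV. M s s' * N s' s'' * V s'')"
      by (rule sum.swap)
    also have "\<dots> = (\<Sum>s''\<in>UNIV. (\<Sum>s'\<in>UNIV. M s s' * N s' s'') * V s'')"
      by (simp add: sum_distrib_right)
    finally show "F (H V) s = (\<Sum>s''\<in>UNIV. (\<Sum>s'\<in>UNIV. M s s' * N s' s'') * V s'')" .
  qed
qed

lemma stoch_funpow: assumes "stoch F" shows "stoch (F ^^ n)"
proof (induction n)
  case 0 then show ?case using stoch_id by (simp add: id_def)
next
  case (Suc n)
  have "stoch (\<lambda>V. F ((F ^^ n) V))" by (rule stoch_comp[OF assms Suc])
  then show ?case by (simp add: comp_def)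
qed

lemma stoch_lin: assumes "stoch F"
  shows "F (\<lambda>x. V x + W x) s = F V s + F W s"
    and "F (\<lambda>x. V x - W x) s = F V s - F W s"
proof -
  obtain M where M: "\<forall>V s. F V s = (\<Sum>s'\<in>UNIV. M s s' * V s')"
    using assms unfolding stoch_def by blast
  show "F (\<lambda>x. V x + W x) s = F V s + F W s" using M by (simp add: distrib_left sum.distrib)
  show "F (\<lambda>x. V x - W x) s = F V s - F W s" using M by (simp add: right_diff_distrib sum_subtractf)
qed

lemma stoch_scale: assumes "stoch F" shows "F (\<lambda>x. c * V x) s = c * F V s"
proof -
  obtain M where M: "\<forall>V s. F V s = (\<Sum>s'\<in>UNIV. M s s' * V s')"
    using assms unfolding stoch_def by blast
  show ?thesis using M by (simp add: sum_distrib_left mult.left_commute)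
qed

lemma stoch_abs: assumes "stoch F" "\<And>x. \<bar>V x\<bar> \<le> c" shows "\<bar>F V s\<bar> \<le> c"
proof -
  obtain M where M: "\<forall>s s'. 0 \<le> M s s'" "\<forall>s. (\<Sum>s'\<in>UNIV. M s s') = 1" "\<forall>V s. F V s = (\<Sum>s'\<in>UNIV. M s s' * V s')"
    using assms(1) unfolding stoch_def by blast
  have "\<bar>F V s\<bar> \<le> (\<Sum>s'\<in>UNIV. \<bar>M s s' * V s'\<bar>)" using M(3) sum_abs by metis
  also have "\<dots> \<le> (\<Sum>s'\<in>UNIV. M s s' * c)"
    using M(1) assms(2) by (intro sum_mono) (simp add: abs_mult mult_left_mono)
  also have "\<dots> = c" using M(2) by (simp add: sum_distrib_right[symmetric])
  finally show ?thesis .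
qed

lemma funpow_fix: "F g = g \<Longrightarrow> (F ^^ n) g = g"
  by (induction n) auto

lemma cesaro_bnd:
  assumes mdp: "is_mdp P" and pp: "is_policy pol" and fixg: "P_pol P pol g = g"
    and eq: "\<And>s. r_pol r pol s + P_pol P pol V s = V s + g s + e s"
    and eb: "\<And>s. \<bar>e s\<bar> \<le> E"
    and n1: "n \<ge> 1"
  shows "\<bar>(1 / real n) * (\<Sum>t<n. (P_pol P pol ^^ t) (r_pol r pol) s) - g s\<bar> \<le> E + 2 * sup_norm V / real n"
proof -
  define Q where "Q = P_pol P pol"
  have sQ: "stoch Q" unfolding Q_def by (rule stoch_P_pol[OF mdp pp])
  define H where "H = sup_norm V"
  have HV: "\<And>x. \<bar>V x\<bar> \<le> H" unfolding H_def by (rule sup_norm_ge)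
  have rp: "r_pol r pol = (\<lambda>x. ((V x + g x) + e x) - Q V x)" using eq unfolding Q_def
    by (auto simp: algebra_simps)
  have step: "(Q ^^ t) (r_pol r pol) s = (Q ^^ t) V s - (Q ^^ Suc t) V s + g s + (Q ^^ t) e s" for t
  proof -
    have st: "stoch (Q ^^ t)" by (rule stoch_funpow[OF sQ])
    have "(Q ^^ t) (r_pol r pol) s = (Q ^^ t) V s + (Q ^^ t) g s + (Q ^^ t) e s - (Q ^^ t) (Q V) s"
      unfolding rp using stoch_lin[OF st] by simp
    moreover have "(Q ^^ t) g = g" using fixg unfolding Q_def by (rule funpow_fix)
    moreover have "(Q ^^ t) (Q V) = (Q ^^ Suc t) V" by (metis funpow_Suc_right comp_apply)
    ultimately show ?thesis by simp
  qed
  define a where "a n = (1 / real n) * (\<Sum>t<n. (Q ^^ t) (r_pol r pol) s)" for n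
  have bnd: "\<bar>a n - g s\<bar> \<le> E + 2 * H / real n" if "n \<ge> 1" for n
  proof -
    have "(\<Sum>t<n. (Q ^^ t) (r_pol r pol) s) = (\<Sum>t<n. (Q ^^ t) V s - (Q ^^ Suc t) V s) + real n * g s + (\<Sum>t<n. (Q ^^ t) e s)"
      unfolding step by (simp add: sum.distrib)
    also have "(\<Sum>t<n. (Q ^^ t) V s - (Q ^^ Suc t) V s) = V s - (Q ^^ n) V s"
      by (induction n) auto
    finally have S: "(\<Sum>t<n. (Q ^^ t) (r_pol r pol) s) = V s - (Q ^^ n) V s + real n * g s + (\<Sum>t<n. (Q ^^ t) e s)" .
    have e1: "\<bar>\<Sum>t<n. (Q ^^ t) e s\<bar> \<le> real n * E"
    proof -
      have "\<bar>\<Sum>t<n. (Q ^^ t) e s\<bar> \<le> (\<Sum>t<n. \<bar>(Q ^^ t) e s\<bar>)" by (rule sum_abs)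
      also have "\<dots> \<le> (\<Sum>t<n. E)" by (intro sum_mono stoch_abs[OF stoch_funpow[OF sQ]] eb)
      finally show ?thesis by simp
    qed
    have v1: "\<bar>V s - (Q ^^ n) V s\<bar> \<le> 2 * H"
    proof -
      have "\<bar>(Q ^^ n) V s\<bar> \<le> H" by (rule stoch_abs[OF stoch_funpow[OF sQ] HV])
      then show ?thesis using HV[of s] by linarith
    qed
    have np: "real n > 0" using that by simp
    have "a n - g s = (V s - (Q ^^ n) V s + (\<Sum>t<n. (Q ^^ t) e s)) / real n"
      unfolding a_def S using np by (simp add: field_simps)
    also have "\<bar>\<dots>\<bar> \<le> (2 * H + real n * E) / real n"
    proof -
      have "\<bar>V s - (Q ^^ n) V s + (\<Sum>t<n. (Q ^^ t) e s)\<bar> \<le> 2 * H + real n * E"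
        using v1 e1 by linarith
      then show ?thesis unfolding abs_divide using np by (simp add: divide_right_mono)
    qed
    also have "\<dots> = E + 2 * H / real n" using np by (simp add: field_simps)
    finally show ?thesis .
  qed
  show ?thesis using bnd[OF n1] unfolding a_def H_def Q_def .
qed

lemma gain_bound:
  assumes mdp: "is_mdp P" and pp: "is_policy pol" and fixg: "P_pol P pol g = g"
    and eq: "\<And>s. r_pol r pol s + P_pol P pol V s = V s + g s + e s"
    and eb: "\<And>s. \<bar>e s\<bar> \<le> E"
  shows "\<bar>gain P r pol s - g s\<bar> \<le> E"
proof -
  define Q where "Q = P_pol P pol"
  have sQ: "stoch Q" unfolding Q_def by (rule stoch_P_pol[OF mdp pp])
  define H where "H = sup_norm V"
  have HV: "\<And>x. \<bar>V x\<bar> \<le> H" unfolding H_def by (rule sup_norm_ge)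
  have rp: "r_pol r pol = (\<lambda>x. ((V x + g x) + e x) - Q V x)" using eq unfolding Q_def
    by (auto simp: algebra_simps)
  have step: "(Q ^^ t) (r_pol r pol) s = (Q ^^ t) V s - (Q ^^ Suc t) V s + g s + (Q ^^ t) e s" for t
  proof -
    have st: "stoch (Q ^^ t)" by (rule stoch_funpow[OF sQ])
    have "(Q ^^ t) (r_pol r pol) s = (Q ^^ t) V s + (Q ^^ t) g s + (Q ^^ t) e s - (Q ^^ t) (Q V) s"
      unfolding rp using stoch_lin[OF st] by simp
    moreover have "(Q ^^ t) g = g" using fixg unfolding Q_def by (rule funpow_fix)
    moreover have "(Q ^^ t) (Q V) = (Q ^^ Suc t) V" by (metis funpow_Suc_right comp_apply)
    ultimately show ?thesis by simp
  qed
  define a where "a n = (1 / real n) * (\<Sum>t<n. (Q ^^ t) (r_pol r pol) s)" for n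
  have bnd: "\<bar>a n - g s\<bar> \<le> E + 2 * H / real n" if "n \<ge> 1" for n
  proof -
    have "(\<Sum>t<n. (Q ^^ t) (r_pol r pol) s) = (\<Sum>t<n. (Q ^^ t) V s - (Q ^^ Suc t) V s) + real n * g s + (\<Sum>t<n. (Q ^^ t) e s)"
      unfolding step by (simp add: sum.distrib)
    also have "(\<Sum>t<n. (Q ^^ t) V s - (Q ^^ Suc t) V s) = V s - (Q ^^ n) V s"
      by (induction n) auto
    finally have S: "(\<Sum>t<n. (Q ^^ t) (r_pol r pol) s) = V s - (Q ^^ n) V s + real n * g s + (\<Sum>t<n. (Q ^^ t) e s)" .
    have e1: "\<bar>\<Sum>t<n. (Q ^^ t) e s\<bar> \<le> real n * E"
    proof -
      have "\<bar>\<Sum>t<n. (Q ^^ t) e s\<bar> \<le> (\<Sum>t<n. \<bar>(Q ^^ t) e s\<bar>)" by (rule sum_abs)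
      also have "\<dots> \<le> (\<Sum>t<n. E)" by (intro sum_mono stoch_abs[OF stoch_funpow[OF sQ]] eb)
      finally show ?thesis by simp
    qed
    have v1: "\<bar>V s - (Q ^^ n) V s\<bar> \<le> 2 * H"
    proof -
      have "\<bar>(Q ^^ n) V s\<bar> \<le> H" by (rule stoch_abs[OF stoch_funpow[OF sQ] HV])
      then show ?thesis using HV[of s] by linarith
    qed
    have np: "real n > 0" using that by simp
    have "a n - g s = (V s - (Q ^^ n) V s + (\<Sum>t<n. (Q ^^ t) e s)) / real n"
      unfolding a_def S using np by (simp add: field_simps)
    also have "\<bar>\<dots>\<bar> \<le> (2 * H + real n * E) / real n"
    proof -
      have "\<bar>V s - (Q ^^ n) V s + (\<Sum>t<n. (Q ^^ t) e s)\<bar> \<le> 2 * H + real n * E"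
        using v1 e1 by linarith
      then show ?thesis unfolding abs_divide using np by (simp add: divide_right_mono)
    qed
    also have "\<dots> = E + 2 * H / real n" using np by (simp add: field_simps)
    finally show ?thesis .
  qed
  have l0: "(\<lambda>n. 2 * H / real n) \<longlonglongrightarrow> 0" by (rule lim_const_over_n)
  have "(\<lambda>n. g s - E - 2 * H / real n) \<longlonglongrightarrow> g s - E - 0" by (intro tendsto_intros l0)
  then have lim1: "(\<lambda>n. ereal (g s - E - 2 * H / real n)) \<longlonglongrightarrow> ereal (g s - E)"
    by (simp add: lim_ereal)
  have "(\<lambda>n. g s + E + 2 * H / real n) \<longlonglongrightarrow> g s + E + 0" by (intro tendsto_intros l0)
  then have lim2: "(\<lambda>n. ereal (g s + E + 2 * H / real n)) \<longlonglongrightarrow> ereal (g s + E)"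
    by (simp add: lim_ereal)
  have ev1: "eventually (\<lambda>n. ereal (g s - E - 2 * H / real n) \<le> ereal (a n)) sequentially"
    using eventually_ge_at_top[of 1] by eventually_elim (use bnd in force)
  have ev2: "eventually (\<lambda>n. ereal (a n) \<le> ereal (g s + E + 2 * H / real n)) sequentially"
    using eventually_ge_at_top[of 1] by eventually_elim (use bnd in force)
  have L1: "ereal (g s - E) \<le> liminf (\<lambda>n. ereal (a n))"
    using Liminf_mono[OF ev1] lim_imp_Liminf[OF trivial_limit_sequentially lim1] by simp
  have L2: "liminf (\<lambda>n. ereal (a n)) \<le> ereal (g s + E)"
    using Liminf_mono[OF ev2] lim_imp_Liminf[OF trivial_limit_sequentially lim2] by simp
  obtain y where y: "liminf (\<lambda>n. ereal (a n)) = ereal y"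
    using L1 L2 by (cases "liminf (\<lambda>n. ereal (a n))") auto
  have "gain P r pol s = real_of_ereal (liminf (\<lambda>n. ereal (a n)))" unfolding gain_def a_def Q_def ..
  then have g: "gain P r pol s = y" using y by simp
  show ?thesis using L1 L2 y g by simp
qed

locale avi =
  fixes P :: "'s::finite \<Rightarrow> 'a::finite \<Rightarrow> 's \<Rightarrow> real"
    and r :: "'s \<Rightarrow> 'a \<Rightarrow> real"
    and g h V0 :: "'s \<Rightarrow> real"
  assumes mdp: "is_mdp P" and sol: "modified_bellman P r g h"
begin

abbreviation "V k \<equiv> anchored_VI P r V0 k"
abbreviation "TV k \<equiv> bellman_T P r (V k)"
abbreviation "D \<equiv> sup_norm (\<lambda>s. V0 s - h s)"
abbreviation "G \<equiv> sup_norm g"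

lemma g_max: "PV P s a g \<le> g s"
proof -
  have "PV P s a g \<le> Max (range (\<lambda>a. \<Sum>s'\<in>UNIV. P s a s' * g s'))"
    unfolding PV_def by (rule Max_ge) auto
  then show ?thesis using sol unfolding modified_bellman_def by simp
qed

lemma g_ex: "\<exists>b. PV P s b g = g s"
proof -
  have "Max (range (\<lambda>a. \<Sum>s'\<in>UNIV. P s a s' * g s')) \<in> range (\<lambda>a. \<Sum>s'\<in>UNIV. P s a s' * g s')"
    by (rule Max_in) auto
  then show ?thesis using sol unfolding modified_bellman_def PV_def by auto
qed

lemma h_bell: "r s a + PV P s a h \<le> h s + g s"
proof -
  have "r s a + PV P s a h \<le> bellman_T P r h s" by (rule T_ge)
  then show ?thesis using sol unfolding modified_bellman_def by simp
qed

lemma pstar: obtains ps where "is_policy ps" "P_pol P ps g = g" "\<And>s. T_pol P r ps h s = h s + g s"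
proof -
  obtain ps where "is_policy ps" "\<forall>s. P_pol P ps g s = g s" "\<forall>s. T_pol P r ps h s = h s + g s"
    using sol unfolding modified_bellman_def by blast
  moreover have "P_pol P ps g = g" using calculation(2) by (intro ext) simp
  ultimately show ?thesis using that by blast
qed

lemma D_ge: "\<bar>V0 s - h s\<bar> \<le> D" by (rule sup_norm_ge)
lemma G_ge: "\<bar>g s\<bar> \<le> G" by (rule sup_norm_ge)

lemma T_pol_decomp:
  assumes "is_policy ps" "P_pol P ps g = g" "\<And>s. T_pol P r ps h s = h s + g s"
  shows "T_pol P r ps (\<lambda>x. h x + c * g x + U x) s = h s + g s + c * g s + P_pol P ps U s"
proof -
  have st: "stoch (P_pol P ps)" by (rule stoch_P_pol[OF mdp assms(1)])
  have "P_pol P ps (\<lambda>x. h x + c * g x + U x) s = P_pol P ps h s + c * P_pol P ps g s + P_pol P ps U s"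
    using stoch_lin(1)[OF st] stoch_scale[OF st] by simp
  moreover have "T_pol P r ps h s = r_pol r ps s + P_pol P ps h s" unfolding T_pol_def ..
  ultimately show ?thesis using assms(2) assms(3)[of s] unfolding T_pol_def by simp
qed

lemma PV_decomp: "PV P s a (\<lambda>x. h x + c * g x + U x) = PV P s a h + c * PV P s a g + PV P s a U"
  by (simp add: PV_add PV_scale)

lemma ThW: assumes "0 \<le> c" shows "bellman_T P r (\<lambda>x. h x + c * g x) s = h s + (c + 1) * g s"
proof (rule antisym)
  obtain a where a: "bellman_T P r (\<lambda>x. h x + c * g x) s = r s a + PV P s a (\<lambda>x. h x + c * g x)"
    using T_ex by blast
  have "PV P s a (\<lambda>x. h x + c * g x) = PV P s a h + c * PV P s a g" by (simp add: PV_add PV_scale)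
  moreover have "c * PV P s a g \<le> c * g s" using g_max assms by (simp add: mult_left_mono)
  ultimately show "bellman_T P r (\<lambda>x. h x + c * g x) s \<le> h s + (c + 1) * g s"
    using a h_bell[of s a] by (simp add: algebra_simps)
next
  obtain ps where ps: "is_policy ps" "P_pol P ps g = g" "\<And>s. T_pol P r ps h s = h s + g s" using pstar by blast
  have "T_pol P r ps (\<lambda>x. h x + c * g x + 0) s = h s + g s + c * g s + P_pol P ps (\<lambda>x. 0) s"
    by (rule T_pol_decomp[OF ps])
  moreover have "P_pol P ps (\<lambda>x. 0) s = 0" unfolding P_pol_def by simp
  moreover have "T_pol P r ps (\<lambda>x. h x + c * g x) s \<le> bellman_T P r (\<lambda>x. h x + c * g x) s"
    by (rule T_pol_le[OF ps(1)])
  ultimately show "h s + (c + 1) * g s \<le> bellman_T P r (\<lambda>x. h x + c * g x) s"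
    by (simp add: algebra_simps)
qed

lemma VS: "V (Suc k) s = (2 / (real k + 3)) * V0 s + ((real k + 1) / (real k + 3)) * TV k s"
proof -
  have "1 - 2 / (real k + 3) = (real k + 1) / (real k + 3)" by (simp add: field_simps)
  then show ?thesis by (simp add: add.commute[of 1] add.assoc)
qed

lemma Ubound: "\<bar>V k s - h s - (real k / 3) * g s\<bar> \<le> D"
proof (induction k arbitrary: s)
  case 0 then show ?case using D_ge by simp
next
  case (Suc k)
  have TW: "bellman_T P r (\<lambda>x. h x + (real k / 3) * g x) s = h s + (real k / 3 + 1) * g s"
    by (rule ThW) simp
  have ne: "\<bar>TV k s - bellman_T P r (\<lambda>x. h x + (real k / 3) * g x) s\<bar> \<le> D"
    by (rule T_nonexp[OF mdp]) (use Suc.IH in \<open>simp add: algebra_simps\<close>)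
  define l where "l = 2 / (real k + 3)"
  have l: "0 \<le> l" "l \<le> 1" "(real k + 1) / (real k + 3) = 1 - l" unfolding l_def by (auto simp: field_simps)
  have c1: "(1 - l) * (real k / 3 + 1) = real (Suc k) / 3" by (simp add: l_def field_simps)
  have VV: "V (Suc k) s = l * V0 s + (1 - l) * TV k s" using VS[of k s] l(3) l_def by simp
  have "l * (V0 s - h s) + (1 - l) * (TV k s - (h s + (real k / 3 + 1) * g s))
      = (l * V0 s + (1 - l) * TV k s) - h s - ((1 - l) * (real k / 3 + 1)) * g s"
    by (simp add: algebra_simps)
  then have eq: "V (Suc k) s - h s - (real (Suc k) / 3) * g s
      = l * (V0 s - h s) + (1 - l) * (TV k s - bellman_T P r (\<lambda>x. h x + (real k / 3) * g x) s)"
    unfolding TW c1 VV by simp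
  have "\<bar>l * (V0 s - h s) + (1 - l) * (TV k s - bellman_T P r (\<lambda>x. h x + (real k / 3) * g x) s)\<bar>
      \<le> l * D + (1 - l) * D"
    using l D_ge[of s] ne
    by (intro order.trans[OF abs_triangle_ineq] add_mono) (auto simp: abs_mult intro: mult_left_mono)
  then show ?case unfolding eq by (simp add: algebra_simps)
qed

end

context avi begin

definition "Sgap = {pol \<in> deterministic_policies. P_pol P pol g \<noteq> g}"

lemma det_policy: assumes "pol \<in> deterministic_policies" shows "is_policy pol"
proof -
  have "\<forall>s. \<exists>a. \<forall>b. pol s b = (if b = a then 1 else 0)" using assms unfolding deterministic_policies_def by blast
  then obtain f where f: "\<And>s b. pol s b = (if b = f s then 1 else 0)" by metis
  show ?thesis unfolding is_policy_def f by (simp add: sum.delta')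
qed

lemma det_subset: "deterministic_policies \<subseteq> range (\<lambda>f::'s \<Rightarrow> 'a. \<lambda>t b. if b = f t then (1::real) else 0)"
proof
  fix pol :: "'s \<Rightarrow> 'a \<Rightarrow> real" assume "pol \<in> deterministic_policies"
  then have "\<forall>s. \<exists>a. \<forall>b. pol s b = (if b = a then 1 else 0)" unfolding deterministic_policies_def by blast
  then obtain f where f: "\<And>s b. pol s b = (if b = f s then 1 else 0)" by metis
  then have "pol = (\<lambda>t b. if b = f t then 1 else 0)" by (intro ext) simp
  then show "pol \<in> range (\<lambda>f::'s \<Rightarrow> 'a. \<lambda>t b. if b = f t then (1::real) else 0)" by blast
qed

lemma Sgap_finite: "finite Sgap"
proof -
  have "finite (range (\<lambda>f::'s \<Rightarrow> 'a. \<lambda>t b. if b = f t then (1::real) else 0))" by simp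
  then have "finite (deterministic_policies :: ('s \<Rightarrow> 'a \<Rightarrow> real) set)" by (rule finite_subset[OF det_subset])
  moreover have "Sgap \<subseteq> deterministic_policies" unfolding Sgap_def by (rule Collect_restrict)
  ultimately show ?thesis by (rule finite_subset[rotated])
qed

lemma gap_def': "gap_eps P g = (INF pol\<in>Sgap. ereal (sup_norm (\<lambda>s. P_pol P pol g s - g s)))"
  unfolding gap_eps_def Sgap_def ..

lemma gap_empty: "Sgap = {} \<Longrightarrow> gap_eps P g = \<infinity>"
  unfolding gap_def' by (simp only: image_empty Inf_empty) (simp add: top_ereal_def)

lemma gap_le: "d \<in> Sgap \<Longrightarrow> gap_eps P g \<le> ereal (sup_norm (\<lambda>s. P_pol P d g s - g s))"
  unfolding gap_def' by (rule INF_lower)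

lemma gap_attained: assumes "Sgap \<noteq> {}"
  shows "\<exists>d\<in>Sgap. gap_eps P g = ereal (sup_norm (\<lambda>s. P_pol P d g s - g s))"
proof -
  let ?A = "(\<lambda>pol. ereal (sup_norm (\<lambda>s. P_pol P pol g s - g s))) ` Sgap"
  have "Inf ?A \<in> ?A"
  proof (rule finite_Inf_in)
    show "finite ?A" using Sgap_finite by simp
    show "?A \<noteq> {}" using assms by simp
    fix x y assume "x \<in> ?A" "y \<in> ?A"
    then show "inf x y \<in> ?A" by (cases "x \<le> y") (auto simp: inf_absorb1 inf_absorb2)
  qed
  moreover have "gap_eps P g = Inf ?A" unfolding gap_def' ..
  ultimately show ?thesis by auto
qed

lemma Sgap_pos: assumes "d \<in> Sgap" shows "0 < sup_norm (\<lambda>s. P_pol P d g s - g s)"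
proof -
  have "P_pol P d g \<noteq> g" using assms unfolding Sgap_def by blast
  then obtain t where "P_pol P d g t \<noteq> g t" by blast
  then have "0 < \<bar>P_pol P d g t - g t\<bar>" by simp
  also have "\<dots> \<le> sup_norm (\<lambda>s. P_pol P d g s - g s)" by (rule sup_norm_ge)
  finally show ?thesis .
qed

lemma Sgap_2G: assumes "d \<in> Sgap" shows "sup_norm (\<lambda>s. P_pol P d g s - g s) \<le> 2 * G"
proof (rule sup_norm_le)
  fix t
  have st: "stoch (P_pol P d)" using assms det_policy stoch_P_pol[OF mdp] unfolding Sgap_def by blast
  have "\<bar>P_pol P d g t\<bar> \<le> G" by (rule stoch_abs[OF st G_ge])
  then show "\<bar>P_pol P d g t - g t\<bar> \<le> 2 * G" using G_ge[of t] by linarith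
qed

lemma viol_det: assumes "PV P s a g \<noteq> g s"
  shows "\<exists>d\<in>Sgap. sup_norm (\<lambda>t. P_pol P d g t - g t) \<le> g s - PV P s a g"
proof -
  define f where "f t = (if t = s then a else (SOME b. PV P t b g = g t))" for t
  define d where "d = (\<lambda>t b. if b = f t then (1::real) else 0)"
  have Pd: "P_pol P d X t = PV P t (f t) X" for X t
  proof -
    have "(\<Sum>b\<in>UNIV. (if b = f t then 1 else 0) * PV P t b X) = (\<Sum>b\<in>UNIV. if b = f t then PV P t b X else 0)"
      by (rule sum.cong) auto
    then show ?thesis unfolding P_pol_eq d_def by simp
  qed
  have ft: "PV P t (f t) g = g t" if "t \<noteq> s" for t
    using that someI_ex[OF g_ex[of t]] unfolding f_def by simp
  have fs: "f s = a" unfolding f_def by simp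
  have lt: "PV P s a g < g s" using g_max[of s a] assms by simp
  have det: "d \<in> deterministic_policies" unfolding deterministic_policies_def d_def by blast
  have ne: "P_pol P d g \<noteq> g"
  proof
    assume "P_pol P d g = g"
    then have "P_pol P d g s = g s" by simp
    then show False using Pd[of g s] fs assms by simp
  qed
  have nb: "sup_norm (\<lambda>t. P_pol P d g t - g t) \<le> g s - PV P s a g"
  proof (rule sup_norm_le)
    fix t show "\<bar>P_pol P d g t - g t\<bar> \<le> g s - PV P s a g"
      using Pd[of g t] ft[of t] fs lt by (cases "t = s") auto
  qed
  show ?thesis using det ne nb unfolding Sgap_def by blast
qed

lemma viol_bound: assumes "TV j s = r s a + PV P s a (V j)"
  shows "real j / 3 * (g s - PV P s a g) \<le> 2 * D"
proof -
  obtain ps where ps: "is_policy ps" "P_pol P ps g = g" "\<And>s. T_pol P r ps h s = h s + g s" using pstar by blast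
  define U where "U x = V j x - h x - (real j / 3) * g x" for x
  have UD: "\<bar>U x\<bar> \<le> D" for x unfolding U_def by (rule Ubound)
  have Vj: "V j = (\<lambda>x. h x + (real j / 3) * g x + U x)" unfolding U_def by (intro ext) simp
  have "T_pol P r ps (V j) s \<le> TV j s" by (rule T_pol_le[OF ps(1)])
  moreover have "T_pol P r ps (V j) s = h s + g s + (real j / 3) * g s + P_pol P ps U s"
    unfolding Vj by (rule T_pol_decomp[OF ps])
  moreover have "\<bar>P_pol P ps U s\<bar> \<le> D" by (rule stoch_abs[OF stoch_P_pol[OF mdp ps(1)] UD])
  moreover have "PV P s a (V j) = PV P s a h + (real j / 3) * PV P s a g + PV P s a U"
    unfolding Vj by (rule PV_decomp)
  moreover have "\<bar>PV P s a U\<bar> \<le> D" by (rule PV_abs[OF mdp UD])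
  moreover note h_bell[of s a]
  moreover have "real j / 3 * (g s - PV P s a g) = real j / 3 * g s - real j / 3 * PV P s a g"
    by (simp add: right_diff_distrib)
  ultimately show ?thesis using assms by linarith
qed

definition "Good j \<longleftrightarrow> (\<forall>s a. TV j s = r s a + PV P s a (V j) \<longrightarrow> PV P s a g = g s)"

lemma Good_empty: assumes "Sgap = {}" shows "Good j"
  unfolding Good_def
proof (intro allI impI, rule ccontr)
  fix s a assume "PV P s a g \<noteq> g s"
  then show False using viol_det assms by blast
qed

lemma Good_eps: assumes "gap_eps P g = ereal eps" "6 * D < real j * eps" shows "Good j"
  unfolding Good_def
proof (intro allI impI, rule ccontr)
  fix s a assume a: "TV j s = r s a + PV P s a (V j)" and ne: "PV P s a g \<noteq> g s"
  obtain d where d: "d \<in> Sgap" "sup_norm (\<lambda>t. P_pol P d g t - g t) \<le> g s - PV P s a g"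
    using viol_det[OF ne] by blast
  have "eps \<le> g s - PV P s a g" using gap_le[OF d(1)] d(2) assms(1) by simp
  moreover have "real j / 3 * (g s - PV P s a g) \<le> 2 * D" by (rule viol_bound[OF a])
  moreover have "0 \<le> real j" by simp
  ultimately have "real j * eps \<le> real j * (g s - PV P s a g)" "real j / 3 * (g s - PV P s a g) \<le> 2 * D"
    by (auto intro: mult_left_mono)
  then have "real j * eps \<le> 6 * D" by linarith
  then show False using assms(2) by simp
qed

lemma Good_pol: assumes "Good k" "is_policy pol" "T_pol P r pol (V k) = TV k"
  shows "P_pol P pol g = g"
proof
  fix s
  let ?M = "TV k s" and ?v = "\<lambda>a. r s a + PV P s a (V k)"
  have vle: "?v a \<le> ?M" for a by (rule T_ge)
  have p0: "0 \<le> pol s a" for a using assms(2) unfolding is_policy_def by blast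
  have p1: "(\<Sum>a\<in>UNIV. pol s a) = 1" using assms(2) unfolding is_policy_def by blast
  have "(\<Sum>a\<in>UNIV. pol s a * (?M - ?v a)) = (\<Sum>a\<in>UNIV. pol s a) * ?M - (\<Sum>a\<in>UNIV. pol s a * ?v a)"
    by (simp add: right_diff_distrib sum_subtractf sum_distrib_right)
  also have "\<dots> = 0" using p1 T_pol_eq[of P r pol "V k" s] assms(3) by simp
  finally have z: "(\<Sum>a\<in>UNIV. pol s a * (?M - ?v a)) = 0" .
  have "\<forall>a\<in>UNIV. pol s a * (?M - ?v a) = 0"
    using z by (subst sum_nonneg_eq_0_iff[symmetric]) (auto intro: mult_nonneg_nonneg p0 simp: vle)
  then have "pol s a * PV P s a g = pol s a * g s" for a
    using assms(1) unfolding Good_def by (cases "pol s a = 0") auto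
  then have "P_pol P pol g s = (\<Sum>a\<in>UNIV. pol s a * g s)" unfolding P_pol_eq by (intro sum.cong) auto
  also have "\<dots> = g s" using p1 by (simp add: sum_distrib_right[symmetric])
  finally show "P_pol P pol g s = g s" .
qed

end

declare anchored_VI.simps(2)[simp del]

lemma T_diff_ge: assumes "bellman_T P r W s = r s b + PV P s b W"
  shows "PV P s b (\<lambda>x. V x - W x) \<le> bellman_T P r V s - bellman_T P r W s"
  using T_ge[of r s b P V] assms by (simp add: PV_diff)

lemma alg_ystep:
  fixes n a b c A B :: real assumes nz: "A \<noteq> 0" "B \<noteq> 0" and hA: "A = n + 3" and hB: "B = n + 4"
  shows "(2 / B * a + (n + 2) / B * c) - (2 / A * a + (n + 1) / A * b)
    = 2 / (A * B) * (b - a) + (n + 2) / B * (c - b)"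
proof -
  have "(2 / B * a + (n + 2) / B * c) - (2 / A * a + (n + 1) / A * b) = ((2 * a + (n + 2) * c) * A - (2 * a + (n + 1) * b) * B) / (A * B)"
    using nz by (simp add: field_simps)
  also have "\<dots> = (2 * (b - a) + (n + 2) * (c - b) * A) / (A * B)"
    unfolding hA hB by (simp add: algebra_simps)
  also have "\<dots> = 2 / (A * B) * (b - a) + (n + 2) / B * (c - b)"
    using nz by (simp add: field_simps)
  finally show ?thesis .
qed
lemma alg2: fixes n A B :: real assumes nz: "A \<noteq> 0" "B \<noteq> 0" and hA: "A = n + 3" and hB: "B = n + 4"
  shows "2 / (A * B) * (A / 3) + (n + 2) / B * (1/3) = 1/3"
proof -
  have "2 / (A * B) * (A / 3) + (n + 2) / B * (1/3) = (2 + (n+2)) / (3 * B)" using nz by (simp add: field_simps)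
  also have "\<dots> = 1/3" using nz unfolding hB by (simp add: field_simps)
  finally show ?thesis .
qed

context avi begin

lemma bD: "\<bar>TV k s - V0 s - ((real k + 3) / 3) * g s\<bar> \<le> 2 * D"
proof -
  have TW: "bellman_T P r (\<lambda>x. h x + (real k / 3) * g x) s = h s + (real k / 3 + 1) * g s"
    by (rule ThW) simp
  have ne: "\<bar>TV k s - bellman_T P r (\<lambda>x. h x + (real k / 3) * g x) s\<bar> \<le> D"
    by (rule T_nonexp[OF mdp]) (use Ubound in \<open>simp add: algebra_simps\<close>)
  have e: "(real k + 3) / 3 = real k / 3 + 1" by (simp add: field_simps)
  show ?thesis using ne D_ge[of s] unfolding TW e abs_le_iff by linarith
qed

lemma ystep: "V (Suc (Suc k)) s - V (Suc k) s
   = 2 / ((real k + 3) * (real k + 4)) * (TV k s - V0 s) + (real k + 2) / (real k + 4) * (TV (Suc k) s - TV k s)"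
proof -
  have 1: "V (Suc (Suc k)) s = 2 / (real k + 4) * V0 s + (real k + 2) / (real k + 4) * TV (Suc k) s"
    using VS[of "Suc k" s] by (simp add: add.commute add.left_commute)
  have 2: "V (Suc k) s = 2 / (real k + 3) * V0 s + (real k + 1) / (real k + 3) * TV k s"
    by (rule VS)
  show ?thesis unfolding 1 2 by (rule alg_ystep) auto
qed

lemma dstep: "V (Suc (Suc k)) s - V (Suc k) s - g s / 3
   = 2 / ((real k + 3) * (real k + 4)) * (TV k s - V0 s - ((real k + 3) / 3) * g s)
     + (real k + 2) / (real k + 4) * (TV (Suc k) s - TV k s - g s / 3)"
proof -
  define c1 where "c1 = 2 / ((real k + 3) * (real k + 4))"
  define c2 where "c2 = (real k + 2) / (real k + 4)"
  define c3 where "c3 = (real k + 3) / 3"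
  have c: "c1 * c3 + c2 * (1/3) = 1/3" unfolding c1_def c2_def c3_def by (rule alg2) auto
  have "g s / 3 = (c1 * c3 + c2 * (1/3)) * g s" unfolding c by simp
  also have "\<dots> = c1 * (c3 * g s) + c2 * (g s / 3)" by (simp add: algebra_simps)
  finally have gg: "g s / 3 = c1 * (c3 * g s) + c2 * (g s / 3)" .
  have ys: "V (Suc (Suc k)) s - V (Suc k) s = c1 * (TV k s - V0 s) + c2 * (TV (Suc k) s - TV k s)"
    unfolding c1_def c2_def by (rule ystep)
  show ?thesis unfolding c1_def[symmetric] c2_def[symmetric] c3_def[symmetric] ys
    using gg by (simp add: algebra_simps)
qed

lemma PV_split: "PV P s a (\<lambda>x. V (Suc k) x - V k x) = PV P s a (\<lambda>x. V (Suc k) x - V k x - g x / 3) + (1/3) * PV P s a g"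
proof -
  have "PV P s a (\<lambda>x. V (Suc k) x - V k x) = PV P s a (\<lambda>x. (V (Suc k) x - V k x - g x / 3) + (1/3) * g x)"
    by (rule arg_cong[where f="PV P s a"]) (rule ext, simp)
  also have "\<dots> = PV P s a (\<lambda>x. V (Suc k) x - V k x - g x / 3) + PV P s a (\<lambda>x. (1/3) * g x)"
    by (rule PV_add)
  also have "PV P s a (\<lambda>x. (1/3) * g x) = (1/3) * PV P s a g" by (rule PV_scale)
  finally show ?thesis .
qed

lemma Bup: assumes "\<And>x. V (Suc k) x - V k x - g x / 3 \<le> c"
  shows "TV (Suc k) s - TV k s - g s / 3 \<le> c"
proof -
  obtain a where a: "TV (Suc k) s = r s a + PV P s a (V (Suc k))" using T_ex by blast
  have "TV (Suc k) s - TV k s \<le> PV P s a (\<lambda>x. V (Suc k) x - V k x)" by (rule T_diff_le[OF a])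
  moreover note PV_split[of s a k]
  moreover have "PV P s a (\<lambda>x. V (Suc k) x - V k x - g x / 3) \<le> c" by (rule PV_upper[OF mdp assms])
  moreover note g_max[of s a]
  ultimately show ?thesis by linarith
qed

lemma Blow_good: assumes "Good k" "\<And>x. c \<le> V (Suc k) x - V k x - g x / 3"
  shows "c \<le> TV (Suc k) s - TV k s - g s / 3"
proof -
  obtain b where b: "TV k s = r s b + PV P s b (V k)" using T_ex by blast
  have gb: "PV P s b g = g s" using assms(1) b unfolding Good_def by blast
  have "PV P s b (\<lambda>x. V (Suc k) x - V k x) \<le> TV (Suc k) s - TV k s" by (rule T_diff_ge[OF b])
  moreover note PV_split[of s b k]
  moreover have "c \<le> PV P s b (\<lambda>x. V (Suc k) x - V k x - g x / 3)" by (rule PV_lower[OF mdp assms(2)])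
  ultimately show ?thesis using gb by linarith
qed

lemma Blow_gen: assumes "\<And>x. c \<le> V (Suc k) x - V k x"
  shows "c \<le> TV (Suc k) s - TV k s"
proof -
  obtain b where b: "TV k s = r s b + PV P s b (V k)" using T_ex by blast
  have "PV P s b (\<lambda>x. V (Suc k) x - V k x) \<le> TV (Suc k) s - TV k s" by (rule T_diff_ge[OF b])
  moreover have "c \<le> PV P s b (\<lambda>x. V (Suc k) x - V k x)" by (rule PV_lower[OF mdp assms])
  ultimately show ?thesis by simp
qed

lemma V1: "V (Suc 0) s - V 0 s = (1/3) * (TV 0 s - V0 s)"
  using VS[of 0 s] by (simp add: field_simps)

lemma d1: "\<bar>V (Suc 0) s - V 0 s - g s / 3\<bar> \<le> 2 * D / 3"
proof -
  have eq: "V (Suc 0) s - V 0 s - g s / 3 = (TV 0 s - V0 s - ((real 0 + 3) / 3) * g s) / 3"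
    using V1[of s] by simp
  have "\<bar>(TV 0 s - V0 s - ((real 0 + 3) / 3) * g s) / 3\<bar> \<le> 2 * D / 3"
    using bD[of 0 s] unfolding abs_divide by simp
  then show ?thesis unfolding eq .
qed

end

lemma alg3: fixes n DD C A B Cc :: real
  assumes nz: "A \<noteq> 0" "B \<noteq> 0" "Cc \<noteq> 0" and hA: "A = n + 2" and hB: "B = n + 3" and hC: "Cc = n + 4"
  shows "2 / (B * Cc) * (2 * DD) + (n + 2) / Cc * ((4 * DD * (n + 1) + C) / (A * B)) = (4 * DD * (n + 2) + C) / (B * Cc)"
proof -
  have "(n + 2) / Cc * ((4 * DD * (n + 1) + C) / (A * B)) = (4 * DD * (n + 1) + C) / (B * Cc)"
    using nz unfolding hA[symmetric] by (simp add: field_simps)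
  moreover have "2 / (B * Cc) * (2 * DD) = 4 * DD / (B * Cc)" using nz by (simp add: field_simps)
  ultimately show ?thesis using nz by (simp add: field_simps)
qed

lemma alg4: fixes n DD GG A B Cc :: real
  assumes nz: "A \<noteq> 0" "B \<noteq> 0" "Cc \<noteq> 0" and hA: "A = n + 2" and hB: "B = n + 3" and hC: "Cc = n + 4"
  shows "2 / (B * Cc) * (2 * DD + B / 3 * GG) + (n + 2) / Cc * (4 * DD * (n + 1) / (A * B) + GG / 3)
     = 4 * DD * (n + 2) / (B * Cc) + GG / 3"
proof -
  have 1: "(n + 2) / Cc * (4 * DD * (n + 1) / (A * B)) = 4 * DD * (n + 1) / (B * Cc)"
    using nz unfolding hA[symmetric] by (simp add: field_simps)
  have 2: "2 / (B * Cc) * (B / 3 * GG) = 2 * GG / (3 * Cc)" using nz by (simp add: field_simps)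
  have 3: "2 * GG / (3 * Cc) + (n + 2) / Cc * (GG / 3) = GG / 3" using nz unfolding hC by (simp add: field_simps add_divide_distrib[symmetric])
  have 4: "2 / (B * Cc) * (2 * DD) + 4 * DD * (n + 1) / (B * Cc) = 4 * DD * (n + 2) / (B * Cc)"
    using nz by (simp add: field_simps)
  have "2 / (B * Cc) * (2 * DD + B / 3 * GG) + (n + 2) / Cc * (4 * DD * (n + 1) / (A * B) + GG / 3)
     = (2 / (B * Cc) * (2 * DD) + (n + 2) / Cc * (4 * DD * (n + 1) / (A * B)))
       + (2 / (B * Cc) * (B / 3 * GG) + (n + 2) / Cc * (GG / 3))"
    by (simp add: algebra_simps)
  also have "\<dots> = 4 * DD * (n + 2) / (B * Cc) + GG / 3" unfolding 1 2 3 4 ..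
  finally show ?thesis .
qed

lemma alg5: fixes n DD C :: real assumes "0 \<le> n"
  shows "((4 * DD * (n + 1) + C) / ((n + 2) * (n + 3)) + 2 / (n + 3) * (2 * DD)) / ((n + 1) / (n + 3))
     = 4 * DD / (n + 2) + C / ((n + 1) * (n + 2)) + 4 * DD / (n + 1)"
proof -
  define A where "A = n + 1"
  define B where "B = n + 2"
  define Cc where "Cc = n + 3"
  have nz: "A \<noteq> 0" "B \<noteq> 0" "Cc \<noteq> 0" "A > 0" "Cc > 0" unfolding A_def B_def Cc_def using assms by auto
  have e: "n + 1 = A" "n + 2 = B" "n + 3 = Cc" unfolding A_def B_def Cc_def by auto
  have "((4 * DD * A + C) / (B * Cc) + 2 / Cc * (2 * DD)) / (A / Cc) = (4 * DD * A + C) / (A * B) + 4 * DD / A"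
    using nz by (simp add: field_simps)
  also have "(4 * DD * A + C) / (A * B) = 4 * DD / B + C / (A * B)" using nz by (simp add: field_simps)
  finally show ?thesis unfolding e by simp
qed

context avi begin

lemma Ub: "V (Suc k) s - V k s - g s / 3 \<le> 4 * D * (real k + 1) / ((real k + 2) * (real k + 3))"
proof (induction k arbitrary: s)
  case 0
  have "4 * D * (real 0 + 1) / ((real 0 + 2) * (real 0 + 3)) = 2 * D / 3" by simp
  then show ?case using abs_le_D1[OF d1[of s]] by simp
next
  case (Suc k)
  define c1 where "c1 = 2 / ((real k + 3) * (real k + 4))"
  define c2 where "c2 = (real k + 2) / (real k + 4)"
  have c: "0 \<le> c1" "0 \<le> c2" unfolding c1_def c2_def by auto
  have X: "TV k s - V0 s - ((real k + 3) / 3) * g s \<le> 2 * D" using bD[of k s] by linarith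
  have Y: "TV (Suc k) s - TV k s - g s / 3 \<le> 4 * D * (real k + 1) / ((real k + 2) * (real k + 3))"
    by (rule Bup) (rule Suc.IH)
  have "V (Suc (Suc k)) s - V (Suc k) s - g s / 3 \<le> c1 * (2 * D) + c2 * (4 * D * (real k + 1) / ((real k + 2) * (real k + 3)))"
    unfolding dstep c1_def[symmetric] c2_def[symmetric]
    using mult_left_mono[OF X c(1)] mult_left_mono[OF Y c(2)] by linarith
  also have "\<dots> = (4 * D * (real k + 2) + 0) / ((real k + 3) * (real k + 4))"
    unfolding c1_def c2_def using alg3[of "real k + 2" "real k + 3" "real k + 4" "real k" D 0] by simp
  finally show ?case by (simp add: algebra_simps)
qed

lemma Lb: "- (4 * D * (real k + 1) / ((real k + 2) * (real k + 3)) + G / 3) \<le> V (Suc k) s - V k s"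
proof (induction k arbitrary: s)
  case 0
  have "V (Suc 0) s - V 0 s = (1/3) * (TV 0 s - V0 s)" by (rule V1)
  moreover have "- 2 * D - G \<le> TV 0 s - V0 s" using bD[of 0 s] G_ge[of s] by (simp add: abs_le_iff)
  ultimately show ?case by simp
next
  case (Suc k)
  define c1 where "c1 = 2 / ((real k + 3) * (real k + 4))"
  define c2 where "c2 = (real k + 2) / (real k + 4)"
  define B where "B = 4 * D * (real k + 1) / ((real k + 2) * (real k + 3))"
  have c: "0 \<le> c1" "0 \<le> c2" unfolding c1_def c2_def by auto
  have gb: "- ((real k + 3) / 3 * G) \<le> (real k + 3) / 3 * g s"
  proof -
    have "\<bar>(real k + 3) / 3 * g s\<bar> \<le> (real k + 3) / 3 * G"
      using G_ge[of s] by (simp add: abs_mult mult_left_mono)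
    then show ?thesis by linarith
  qed
  have X: "- (2 * D + (real k + 3) / 3 * G) \<le> TV k s - V0 s" using bD[of k s] gb unfolding abs_le_iff by linarith
  have Y: "- (B + G / 3) \<le> TV (Suc k) s - TV k s"
    by (rule Blow_gen) (use Suc.IH in \<open>simp add: B_def\<close>)
  have "c1 * (- (2 * D + (real k + 3) / 3 * G)) + c2 * (- (B + G / 3)) \<le> V (Suc (Suc k)) s - V (Suc k) s"
    unfolding ystep c1_def[symmetric] c2_def[symmetric]
    using mult_left_mono[OF X c(1)] mult_left_mono[OF Y c(2)] by linarith
  moreover have "c1 * (2 * D + (real k + 3) / 3 * G) + c2 * (B + G / 3) = 4 * D * (real k + 2) / ((real k + 3) * (real k + 4)) + G / 3"
    unfolding c1_def c2_def B_def using alg4[of "real k + 2" "real k + 3" "real k + 4" "real k" D G] by simp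
  ultimately show ?case by (simp add: algebra_simps)
qed

end

context avi begin

lemma dabs: "\<bar>V (Suc k) s - V k s - g s / 3\<bar> \<le> 4 * D * (real k + 1) / ((real k + 2) * (real k + 3)) + 2 * G / 3"
  using Ub[of k s] Lb[of k s] G_ge[of s] unfolding abs_le_iff by linarith

lemma Clean:
  assumes good: "\<And>j. j0 \<le> j \<Longrightarrow> Good j" and C: "0 \<le> C"
    and base: "\<And>s. \<bar>V (Suc j0) s - V j0 s - g s / 3\<bar> \<le> (4 * D * (real j0 + 1) + C) / ((real j0 + 2) * (real j0 + 3))"
    and m: "j0 \<le> m"
  shows "\<bar>V (Suc m) s - V m s - g s / 3\<bar> \<le> (4 * D * (real m + 1) + C) / ((real m + 2) * (real m + 3))"
proof -
  have "\<forall>s. \<bar>V (Suc m) s - V m s - g s / 3\<bar> \<le> (4 * D * (real m + 1) + C) / ((real m + 2) * (real m + 3))"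
    using m
  proof (induction m rule: dec_induct)
    case base then show ?case using assms(3) by blast
  next
    case (step k)
    show ?case
    proof
      fix s
      define c1 where "c1 = 2 / ((real k + 3) * (real k + 4))"
      define c2 where "c2 = (real k + 2) / (real k + 4)"
      define B where "B = (4 * D * (real k + 1) + C) / ((real k + 2) * (real k + 3))"
      have c: "0 \<le> c1" "0 \<le> c2" unfolding c1_def c2_def by auto
      have IH: "\<And>x. \<bar>V (Suc k) x - V k x - g x / 3\<bar> \<le> B" using step.IH unfolding B_def by blast
      have X: "\<bar>TV k s - V0 s - ((real k + 3) / 3) * g s\<bar> \<le> 2 * D" by (rule bD)
      have Y1: "TV (Suc k) s - TV k s - g s / 3 \<le> B" by (rule Bup) (use IH abs_le_D1 in blast)
      have Y2: "- B \<le> TV (Suc k) s - TV k s - g s / 3"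
      proof (rule Blow_good)
        show "Good k" using good step.hyps by blast
        fix x show "- B \<le> V (Suc k) x - V k x - g x / 3" using IH[of x] by linarith
      qed
      have Y: "\<bar>TV (Suc k) s - TV k s - g s / 3\<bar> \<le> B" using Y1 Y2 by linarith
      have "\<bar>V (Suc (Suc k)) s - V (Suc k) s - g s / 3\<bar> \<le> c1 * (2 * D) + c2 * B"
        unfolding dstep c1_def[symmetric] c2_def[symmetric]
        using c mult_left_mono[OF X c(1)] mult_left_mono[OF Y c(2)]
        by (intro order.trans[OF abs_triangle_ineq] add_mono) (auto simp: abs_mult)
      also have "\<dots> = (4 * D * (real k + 2) + C) / ((real k + 3) * (real k + 4))"
        unfolding c1_def c2_def B_def using alg3[of "real k + 2" "real k + 3" "real k + 4" "real k" D C] by simp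
      finally show "\<bar>V (Suc (Suc k)) s - V (Suc k) s - g s / 3\<bar> \<le> (4 * D * (real (Suc k) + 1) + C) / ((real (Suc k) + 2) * (real (Suc k) + 3))"
        by (simp add: algebra_simps)
    qed
  qed
  then show ?thesis by blast
qed

lemma Err:
  assumes d: "\<bar>V (Suc k) s - V k s - g s / 3\<bar> \<le> (4 * D * (real k + 1) + C) / ((real k + 2) * (real k + 3))"
  shows "\<bar>TV k s - V k s - g s\<bar> \<le> 8 * D / (real k + 1) + C / ((real k + 1) * (real k + 2))"
proof -
  define n where "n = real k"
  have n0: "0 \<le> n" unfolding n_def by simp
  define q1 where "q1 = 2 / (n + 3)"
  define q2 where "q2 = (n + 1) / (n + 3)"
  have q2p: "0 < q2" unfolding q2_def using n0 by simp
  have q12: "q2 = 1 - q1" unfolding q1_def q2_def using n0 by (simp add: field_simps)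
  have q3: "q2 = q1 * (n / 3) + 1 / 3" unfolding q1_def q2_def using n0 by (simp add: field_simps)
  have VSk: "V (Suc k) s = q1 * V0 s + q2 * TV k s" unfolding q1_def q2_def n_def by (rule VS)
  define w where "w = V k s - V0 s - (n / 3) * g s"
  have w: "\<bar>w\<bar> \<le> 2 * D" using Ubound[of k s] D_ge[of s] unfolding w_def n_def abs_le_iff by linarith
  have e1: "q2 * (TV k s - V k s - g s) = q2 * TV k s - q2 * V k s - q2 * g s" by (simp add: algebra_simps)
  have e3: "q2 * V k s = V k s - q1 * V k s" unfolding q12 by (simp add: algebra_simps)
  have e4: "q2 * g s = q1 * ((n / 3) * g s) + g s / 3" unfolding q3 by (simp add: algebra_simps)
  have e5: "q1 * w = q1 * V k s - q1 * V0 s - q1 * ((n / 3) * g s)" unfolding w_def by (simp add: algebra_simps)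
  have id: "q2 * (TV k s - V k s - g s) = (V (Suc k) s - V k s - g s / 3) + q1 * w"
    using e1 e3 e4 e5 VSk by linarith
  have q1p: "0 \<le> q1" unfolding q1_def using n0 by simp
  have "\<bar>(V (Suc k) s - V k s - g s / 3) + q1 * w\<bar> \<le> (4 * D * (n + 1) + C) / ((n + 2) * (n + 3)) + q1 * (2 * D)"
    using d w q1p unfolding n_def[symmetric]
    by (intro order.trans[OF abs_triangle_ineq] add_mono) (auto simp: abs_mult intro: mult_left_mono)
  then have "q2 * \<bar>TV k s - V k s - g s\<bar> \<le> (4 * D * (n + 1) + C) / ((n + 2) * (n + 3)) + q1 * (2 * D)"
    using id q2p by (simp add: abs_mult)
  then have "\<bar>TV k s - V k s - g s\<bar> \<le> ((4 * D * (n + 1) + C) / ((n + 2) * (n + 3)) + q1 * (2 * D)) / q2"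
    using q2p by (simp add: field_simps)
  also have "\<dots> = 4 * D / (n + 2) + C / ((n + 1) * (n + 2)) + 4 * D / (n + 1)"
    unfolding q1_def q2_def by (rule alg5[OF n0])
  also have "\<dots> \<le> 8 * D / (n + 1) + C / ((n + 1) * (n + 2))"
  proof -
    have D0: "0 \<le> D" by (rule sup_norm_nonneg)
    have "4 * D / (n + 2) \<le> 4 * D / (n + 1)" using D0 n0 by (intro divide_left_mono) auto
    then show ?thesis by (simp add: field_simps)
  qed
  finally show ?thesis unfolding n_def .
qed

lemma gR: "\<bar>g s\<bar> \<le> reward_norm r"
proof (rule ccontr)
  assume A: "\<not> \<bar>g s\<bar> \<le> reward_norm r"
  define R where "R = reward_norm r"
  define dl where "dl = \<bar>g s\<bar> - R"
  have dl: "0 < dl" using A unfolding dl_def R_def by simp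
  obtain ps where ps: "is_policy ps" "P_pol P ps g = g" "\<And>s. T_pol P r ps h s = h s + g s" using pstar by blast
  define H where "H = sup_norm h"
  have H0: "0 \<le> H" unfolding H_def by (rule sup_norm_nonneg)
  obtain n :: nat where n: "2 * H / dl < real n" using reals_Archimedean2 by blast
  have npos: "0 < real n" using n H0 dl by (smt (verit) divide_nonneg_pos)
  then have n1: "n \<ge> 1" by simp
  have eq: "r_pol r ps x + P_pol P ps h x = h x + g x + (\<lambda>_. 0) x" for x using ps(3)[of x] unfolding T_pol_def by simp
  have cb: "\<bar>(1 / real n) * (\<Sum>t<n. (P_pol P ps ^^ t) (r_pol r ps) s) - g s\<bar> \<le> 0 + 2 * sup_norm h / real n"
    by (rule cesaro_bnd[OF mdp ps(1) ps(2) eq _ n1]) simp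
  have rb: "\<bar>r_pol r ps x\<bar> \<le> R" for x
  proof -
    have "\<bar>r_pol r ps x\<bar> \<le> (\<Sum>a\<in>UNIV. \<bar>ps x a * r x a\<bar>)" unfolding r_pol_def by (rule sum_abs)
    also have "\<dots> \<le> (\<Sum>a\<in>UNIV. ps x a * R)"
      using ps(1) reward_norm_ge[of r x] unfolding R_def is_policy_def
      by (intro sum_mono) (auto simp: abs_mult intro: mult_left_mono)
    also have "\<dots> = R" using ps(1) unfolding is_policy_def by (simp add: sum_distrib_right[symmetric])
    finally show ?thesis .
  qed
  have st: "stoch (P_pol P ps ^^ t)" for t by (rule stoch_funpow[OF stoch_P_pol[OF mdp ps(1)]])
  have "\<bar>\<Sum>t<n. (P_pol P ps ^^ t) (r_pol r ps) s\<bar> \<le> (\<Sum>t<n. \<bar>(P_pol P ps ^^ t) (r_pol r ps) s\<bar>)" by (rule sum_abs)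
  also have "\<dots> \<le> (\<Sum>t<n. R)" by (intro sum_mono stoch_abs[OF st rb])
  finally have "\<bar>\<Sum>t<n. (P_pol P ps ^^ t) (r_pol r ps) s\<bar> \<le> real n * R" by simp
  then have ab: "\<bar>(1 / real n) * (\<Sum>t<n. (P_pol P ps ^^ t) (r_pol r ps) s)\<bar> \<le> R"
    using npos by (simp add: abs_mult field_simps)
  have "\<bar>g s\<bar> \<le> R + 2 * H / real n" using cb ab unfolding H_def by linarith
  moreover have "2 * H / real n < dl" using n npos dl by (simp add: field_simps)
  ultimately show False unfolding dl_def by linarith
qed

lemma GR: "G \<le> reward_norm r" by (rule sup_norm_le) (rule gR)

end

lemma final_ineq:
  fixes x Kr kk j0 :: real
  assumes x0: "0 \<le> x" and j0: "j0 \<le> x + 1" and j00: "0 \<le> j0" and Kr: "2 * x + 3 \<le> Kr" and kk: "Kr < kk"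
  shows "(2 / 3) * ((j0 + 2) * (j0 + 3)) \<le> Kr * (kk + 2)"
proof -
  have "(j0 + 2) * (j0 + 3) \<le> (x + 3) * (x + 4)" using j0 j00 x0 by (intro mult_mono) auto
  moreover have "(2 * x + 3) * (2 * x + 5) \<le> Kr * (kk + 2)" using Kr kk x0 by (intro mult_mono) auto
  moreover have "(x + 3) * (x + 4) = x * x + 7 * x + 12" by (simp add: algebra_simps)
  moreover have "(2 * x + 3) * (2 * x + 5) = 4 * (x * x) + 16 * x + 15" by (simp add: algebra_simps)
  moreover have "0 \<le> x * x" by simp
  ultimately show ?thesis using x0 by linarith
qed

theorem theorem2:
  fixes P :: "'s::finite \<Rightarrow> 'a::finite \<Rightarrow> 's \<Rightarrow> real"
    and r :: "'s \<Rightarrow> 'a \<Rightarrow> real"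
    and g h V0 :: "'s \<Rightarrow> real"
    and pol :: "nat \<Rightarrow> 's \<Rightarrow> 'a \<Rightarrow> real"
    and K :: ereal and k :: nat
  assumes mdp: "is_mdp P"
    and sol: "modified_bellman P r g h"
    and greedy_pol: "\<And>k. is_policy (pol k)"
    and greedy: "\<And>k. T_pol P r (pol k) (anchored_VI P r V0 k) = bellman_T P r (anchored_VI P r V0 k)"
    and K_def: "K = ereal (3 * reward_norm r + 12 * sup_norm (\<lambda>s. V0 s - h s) + 3 * sup_norm g)
                    / gap_eps P g"
    and k_gt: "ereal (real k) > K"
  shows "sup_norm (\<lambda>s. g s - gain P r (pol k) s)
           \<le> sup_norm (\<lambda>s. bellman_T P r (anchored_VI P r V0 k) s - anchored_VI P r V0 k s - g s)
       \<and> sup_norm (\<lambda>s. bellman_T P r (anchored_VI P r V0 k) s - anchored_VI P r V0 k s - g s)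
           \<le> 8 / (real k + 1) * sup_norm (\<lambda>s. V0 s - h s)
             + real_of_ereal K / (real k + 1) * sup_norm g"
proof -
  interpret avi P r g h V0 using mdp sol by unfold_locales
  define E where "E = sup_norm (\<lambda>s. TV k s - V k s - g s)"
  define N where "N = 3 * reward_norm r + 12 * D + 3 * G"
  have D0: "0 \<le> D" by (rule sup_norm_nonneg)
  have G0: "0 \<le> G" by (rule sup_norm_nonneg)
  have R0: "G \<le> reward_norm r" by (rule GR)
  have main: "Good k \<and> (\<forall>s. \<bar>TV k s - V k s - g s\<bar> \<le> 8 * D / (real k + 1) + real_of_ereal K / (real k + 1) * G)"
  proof (cases "Sgap = {}")
    case True
    have K0: "K = 0" using K_def gap_empty[OF True] by simp
    have good: "Good j" for j by (rule Good_empty[OF True])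
    have base: "\<bar>V (Suc 0) s - V 0 s - g s / 3\<bar> \<le> (4 * D * (real 0 + 1) + 0) / ((real 0 + 2) * (real 0 + 3))" for s
      using d1[of s] by simp
    have "\<bar>TV k s - V k s - g s\<bar> \<le> 8 * D / (real k + 1) + 0 / ((real k + 1) * (real k + 2))" for s
      by (rule Err, rule Clean[of 0]) (use good base in auto)
    then show ?thesis using good K0 by simp
  next
    case False
    obtain d0 where d0: "d0 \<in> Sgap" "gap_eps P g = ereal (sup_norm (\<lambda>s. P_pol P d0 g s - g s))"
      using gap_attained[OF False] by blast
    define eps where "eps = sup_norm (\<lambda>s. P_pol P d0 g s - g s)"
    have ep: "0 < eps" unfolding eps_def by (rule Sgap_pos[OF d0(1)])
    have e2G: "eps \<le> 2 * G" unfolding eps_def by (rule Sgap_2G[OF d0(1)])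
    have gap: "gap_eps P g = ereal eps" using d0(2) unfolding eps_def .
    define Kr where "Kr = N / eps"
    have KK: "K = ereal Kr" using K_def gap ep unfolding Kr_def N_def by simp
    have kK: "Kr < real k" using k_gt KK by simp
    define x where "x = 6 * D / eps"
    have x0: "0 \<le> x" unfolding x_def using D0 ep by simp
    define j0 where "j0 = nat \<lfloor>x\<rfloor> + 1"
    have j0x: "x < real j0" unfolding j0_def using x0 by linarith
    have j0x2: "real j0 \<le> x + 1" unfolding j0_def using x0 by linarith
    have Krx: "2 * x + 3 \<le> Kr"
    proof -
      have "3 \<le> (3 * reward_norm r + 3 * G) / eps" using R0 e2G ep by (simp add: field_simps)
      moreover have "Kr = 2 * x + (3 * reward_norm r + 3 * G) / eps"
        unfolding Kr_def N_def x_def using ep by (simp add: field_simps)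
      ultimately show ?thesis by linarith
    qed
    have kj0: "j0 \<le> k"
    proof -
      have "x < real k" using Krx kK x0 by linarith
      then have "\<lfloor>x\<rfloor> < int k" by linarith
      then show ?thesis unfolding j0_def using x0 by linarith
    qed
    have good: "Good j" if "j0 \<le> j" for j
    proof (rule Good_eps[OF gap])
      have "x < real j" using j0x that by linarith
      then have "x * eps < real j * eps" using ep by (simp add: mult_strict_right_mono)
      then show "6 * D < real j * eps" unfolding x_def using ep by (simp add: field_simps)
    qed
    define C where "C = (2 * G / 3) * ((real j0 + 2) * (real j0 + 3))"
    have C0: "0 \<le> C" unfolding C_def using G0 by simp
    have base: "\<bar>V (Suc j0) s - V j0 s - g s / 3\<bar> \<le> (4 * D * (real j0 + 1) + C) / ((real j0 + 2) * (real j0 + 3))" for s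
    proof -
      define AB where "AB = (real j0 + 2) * (real j0 + 3)"
      have AB: "AB \<noteq> 0" unfolding AB_def by simp
      have "(4 * D * (real j0 + 1) + C) / AB = 4 * D * (real j0 + 1) / AB + C / AB" by (rule add_divide_distrib)
      moreover have "C / AB = 2 * G / 3" unfolding C_def AB_def[symmetric] using AB by simp
      ultimately have "4 * D * (real j0 + 1) / ((real j0 + 2) * (real j0 + 3)) + 2 * G / 3 = (4 * D * (real j0 + 1) + C) / ((real j0 + 2) * (real j0 + 3))"
        unfolding AB_def by simp
      then show ?thesis using dabs[of j0 s] by simp
    qed
    have err: "\<bar>TV k s - V k s - g s\<bar> \<le> 8 * D / (real k + 1) + C / ((real k + 1) * (real k + 2))" for s
      by (rule Err, rule Clean[of j0, OF good C0 base kj0]) 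
    have fin: "C / ((real k + 1) * (real k + 2)) \<le> real_of_ereal K / (real k + 1) * G"
    proof -
      have "(2 / 3) * ((real j0 + 2) * (real j0 + 3)) \<le> Kr * (real k + 2)"
        by (rule final_ineq[OF x0 j0x2 _ Krx kK]) simp
      then have "G * ((2 / 3) * ((real j0 + 2) * (real j0 + 3))) \<le> G * (Kr * (real k + 2))"
        using G0 by (rule mult_left_mono)
      moreover have "C = G * ((2 / 3) * ((real j0 + 2) * (real j0 + 3)))" unfolding C_def by (simp add: algebra_simps)
      ultimately have "C \<le> (Kr * (real k + 2)) * G" by (simp add: algebra_simps)
      then have "C / ((real k + 1) * (real k + 2)) \<le> (Kr * (real k + 2)) * G / ((real k + 1) * (real k + 2))"
        by (intro divide_right_mono) auto
      also have "\<dots> = Kr / (real k + 1) * G"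
      proof -
        have gen: "(Kr * B) * G / (A * B) = Kr / A * G" if "A \<noteq> 0" "B \<noteq> 0" for A B :: real
          using that by (simp add: field_simps)
        show ?thesis by (rule gen) auto
      qed
      finally show ?thesis using KK by simp
    qed
    show ?thesis
    proof (intro conjI allI)
      show "Good k" by (rule good[OF kj0])
      fix s show "\<bar>TV k s - V k s - g s\<bar> \<le> 8 * D / (real k + 1) + real_of_ereal K / (real k + 1) * G"
        using err[of s] fin by linarith
    qed
  qed
  have part2: "E \<le> 8 / (real k + 1) * D + real_of_ereal K / (real k + 1) * G"
    unfolding E_def using main by (intro sup_norm_le) simp
  have part1: "sup_norm (\<lambda>s. g s - gain P r (pol k) s) \<le> E"
  proof (rule sup_norm_le)
    fix s
    have fixg: "P_pol P (pol k) g = g" using main Good_pol greedy_pol greedy by blast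
    have eq: "r_pol r (pol k) x + P_pol P (pol k) (V k) x = V k x + g x + (TV k x - V k x - g x)" for x
      using fun_cong[OF greedy[of k], of x] unfolding T_pol_def by simp
    have "\<bar>gain P r (pol k) s - g s\<bar> \<le> E"
      by (rule gain_bound[OF mdp greedy_pol fixg eq]) (unfold E_def, rule sup_norm_ge)
    then show "\<bar>g s - gain P r (pol k) s\<bar> \<le> E" by simp
  qed
  show ?thesis using part1 part2 unfolding E_def by simp
qed

end
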